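(* Let $\{\omega_n\}_{n\ge0}$ be a sequence in $\mathbb{T}$ with the repetition property. Then each of the following sequences has the repetition property: (a) $\{\omega_{n+l}\}_{n\ge0}$ for every $l\in\mathbb{Z}_+$; (b) $\{\omega_{nl}\}_{n\ge0}$ for every $l\in\mathbb{Z}_+$; (c) $\{l\omega_n\}_{n\ge0}$ for every $l\in\mathbb{Z}$. Moreover, the original sequence together with all the sequences listed in (a), (b), (c) have the joint repetition property.
   Context: $\mathbb{T}=\mathbb{R}/\mathbb{Z}$ with metric $\mathrm{dist}(x,y)=\langle x-y\rangle$, where $\langle\tau\rangle=\min\{|\hat\tau-p|:p\in\mathbb{Z}\}$ for any representative $\hat\tau\in\mathbb{R}$ of $\tau$. $\mathbb{Z}_+=\{1,2,\ldots\}$. A sequence $\{\omega_n\}_{n\ge0}$ in a metric space $\Omega$ has the repetition property if for every $\varepsilon>0$ and $r \in \mathbb{Z}_+$ there exists $q \in \mathbb{Z}_+$ such that $\mathrm{dist}(\omega_n,\omega_{n+q}) < \varepsilon$ for $n = 0,1,\ldots, rq$. A family of sequences $\{\omega^{(\gamma)}_n\}_{n\ge0}$ in metric spaces $\Omega^{(\gamma)}$, $\gamma\in\Gamma$, has the joint repetition property if each of them has the repetition property and, for each finite subfamily and each $\varepsilon>0$, $r\in\mathbb{Z}_+$, a single $q\in\mathbb{Z}_+$ can be chosen that works simultaneously for all sequences in the subfamily. *)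

theory Defs
  imports "HOL-Analysis.Analysis"
begin

text \<open>The circle T = R/Z is represented by real representatives; the metric is
  dist(x,y) = <x - y>, where <t> = min { |t - p| : p integer }.  All notions below
  are invariant under the choice of representatives.\<close>

definition tnorm :: "real \<Rightarrow> real" where
  "tnorm t = Inf {\<bar>t - of_int p\<bar> | p. True}"

definition tdist :: "real \<Rightarrow> real \<Rightarrow> real" where
  "tdist x y = tnorm (x - y)"

definition repetition_property :: "('a \<Rightarrow> 'a \<Rightarrow> real) \<Rightarrow> (nat \<Rightarrow> 'a) \<Rightarrow> bool" where
  "repetition_property d w \<longleftrightarrow>
     (\<forall>\<epsilon>>0. \<forall>r::nat. r \<ge> 1 \<longrightarrow>
        (\<exists>q::nat. q \<ge> 1 \<and> (\<forall>n\<le>r*q. d (w n) (w (n+q)) < \<epsilon>)))"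

definition joint_repetition_property :: "('a \<Rightarrow> 'a \<Rightarrow> real) \<Rightarrow> (nat \<Rightarrow> 'a) set \<Rightarrow> bool" where
  "joint_repetition_property d S \<longleftrightarrow>
     (\<forall>w\<in>S. repetition_property d w) \<and>
     (\<forall>F. F \<subseteq> S \<longrightarrow> finite F \<longrightarrow>
        (\<forall>\<epsilon>>0. \<forall>r::nat. r \<ge> 1 \<longrightarrow>
           (\<exists>q::nat. q \<ge> 1 \<and> (\<forall>w\<in>F. \<forall>n\<le>r*q. d (w n) (w (n+q)) < \<epsilon>))))"

end

theory Submission
  imports Defs
begin

lemma tnorm_le: "tnorm t \<le> \<bar>t - of_int p\<bar>"
  unfolding tnorm_def
  by (rule cInf_lower) (auto intro!: bdd_belowI[where m=0])

lemma tnorm_approx: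
  assumes "e > 0" shows "\<exists>p::int. \<bar>t - of_int p\<bar> < tnorm t + e"
proof (rule ccontr)
  assume "\<not> ?thesis"
  hence "\<forall>p::int. tnorm t + e \<le> \<bar>t - of_int p\<bar>" by (auto simp: not_less)
  hence "tnorm t + e \<le> tnorm t" unfolding tnorm_def
    by (intro cInf_greatest) auto
  with assms show False by simp
qed

lemma tnorm_add: "tnorm (a + b) \<le> tnorm a + tnorm b"
proof (rule field_le_epsilon)
  fix e :: real assume "e > 0"
  then obtain p q :: int where p: "\<bar>a - of_int p\<bar> < tnorm a + e/2"
    and q: "\<bar>b - of_int q\<bar> < tnorm b + e/2"
    using tnorm_approx[of "e/2"] by (metis half_gt_zero)
  have "tnorm (a+b) \<le> \<bar>a + b - of_int (p+q)\<bar>" by (rule tnorm_le)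
  also have "\<dots> \<le> \<bar>a - of_int p\<bar> + \<bar>b - of_int q\<bar>" by simp
  finally show "tnorm (a+b) \<le> tnorm a + tnorm b + e" using p q by simp
qed

lemma tnorm_mult: "tnorm (of_int k * x) \<le> \<bar>of_int k\<bar> * tnorm x"
proof (rule field_le_epsilon)
  fix e :: real assume e: "e > 0"
  define e' where "e' = e / (\<bar>of_int k\<bar> + 1)"
  have e': "e' > 0" using e by (simp add: e'_def)
  obtain p :: int where p: "\<bar>x - of_int p\<bar> < tnorm x + e'"
    using tnorm_approx[OF e'] by blast
  have "tnorm (of_int k * x) \<le> \<bar>of_int k * x - of_int (k*p)\<bar>" by (rule tnorm_le)
  also have "\<dots> = \<bar>of_int k\<bar> * \<bar>x - of_int p\<bar>"
    by (simp add: abs_mult[symmetric] right_diff_distrib)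
  also have "\<dots> \<le> \<bar>of_int k\<bar> * (tnorm x + e')"
    using p by (intro mult_left_mono) auto
  also have "\<dots> = \<bar>of_int k\<bar> * tnorm x + \<bar>of_int k\<bar> * e'" by (simp add: algebra_simps)
  also have "\<bar>of_int k\<bar> * e' \<le> e"
    using e by (simp add: e'_def field_simps)
  finally show "tnorm (of_int k * x) \<le> \<bar>of_int k\<bar> * tnorm x + e" by simp
qed

lemma chain:
  fixes \<omega> :: "nat \<Rightarrow> real"
  assumes step: "\<And>n. n \<le> R * q \<Longrightarrow> tdist (\<omega> n) (\<omega> (n+q)) < e"
  shows "(\<forall>j<k. m + j*q \<le> R*q) \<Longrightarrow> tnorm (\<omega> m - \<omega> (m + k*q)) \<le> real k * e"
proof (induction k)
  case 0
  have "tnorm 0 \<le> \<bar>0 - of_int 0\<bar>" by (rule tnorm_le)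
  then show ?case by simp
next
  case (Suc k)
  have IH: "tnorm (\<omega> m - \<omega> (m + k*q)) \<le> real k * e" using Suc by auto
  have "m + k*q \<le> R*q" using Suc.prems by auto
  hence s: "tnorm (\<omega> (m+k*q) - \<omega> (m + k*q + q)) < e" using step unfolding tdist_def by blast
  have eq: "\<omega> m - \<omega> (m + Suc k*q) = (\<omega> m - \<omega> (m + k*q)) + (\<omega> (m+k*q) - \<omega> (m + k*q + q))"
    by (simp add: algebra_simps)
  have "tnorm (\<omega> m - \<omega> (m + Suc k*q)) \<le> tnorm (\<omega> m - \<omega> (m + k*q)) + tnorm (\<omega> (m+k*q) - \<omega> (m + k*q + q))"
    unfolding eq by (rule tnorm_add)
  with IH s show ?case by (simp add: algebra_simps)
qed

definition good :: "(nat \<Rightarrow> real) \<Rightarrow> nat \<Rightarrow> (nat \<Rightarrow> real) \<Rightarrow> bool" where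
  "good \<omega> N w \<longleftrightarrow> (\<exists>l. 1 \<le> l \<and> l \<le> N \<and> w = (\<lambda>n. \<omega> (n + l)))
     \<or> (\<exists>l. 1 \<le> l \<and> l \<le> N \<and> w = (\<lambda>n. \<omega> (n * l)))
     \<or> (\<exists>l::int. \<bar>l\<bar> \<le> int N \<and> w = (\<lambda>n. of_int l * \<omega> n))"

lemma good_mono: "good \<omega> N w \<Longrightarrow> N \<le> M \<Longrightarrow> good \<omega> M w"
  unfolding good_def
  apply (elim disjE exE conjE)
  subgoal for l by (rule disjI1, rule exI[of _ l]) auto
  subgoal for l by (rule disjI2, rule disjI1, rule exI[of _ l]) auto
  subgoal for l by (rule disjI2, rule disjI2, rule exI[of _ l]) auto
  done

lemma core:
  fixes \<omega> :: "nat \<Rightarrow> real"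
  assumes rep: "repetition_property tdist \<omega>" and N: "N \<ge> 1" and e: "\<epsilon> > 0" and r: "r \<ge> 1"
  shows "\<exists>q::nat. q \<ge> 1 \<and> (\<forall>w. good \<omega> N w \<longrightarrow> (\<forall>n\<le>r*q. tdist (w n) (w (n+q)) < \<epsilon>))"
proof -
  define e' where "e' = \<epsilon> / (2 * real N)"
  have e': "e' > 0" using e N by (simp add: e'_def)
  define R where "R = (r+1)*N + N"
  have "R \<ge> 1" using N by (simp add: R_def)
  then obtain q where q1: "q \<ge> 1" and step: "\<And>n. n \<le> R*q \<Longrightarrow> tdist (\<omega> n) (\<omega> (n+q)) < e'"
    using rep e' unfolding repetition_property_def by blast
  have Ne': "real N * e' = \<epsilon>/2" using N by (simp add: e'_def)
  have one: "tnorm (\<omega> m - \<omega> (m + q)) \<le> \<epsilon>/2" if "m \<le> R*q" for m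
  proof -
    have "tnorm (\<omega> m - \<omega> (m + q)) < e'" using step[OF that] by (simp add: tdist_def)
    also have "e' \<le> real N * e'" using N e' by simp
    finally show ?thesis using Ne' by simp
  qed
  have "\<forall>w. good \<omega> N w \<longrightarrow> (\<forall>n\<le>r*q. tdist (w n) (w (n+q)) < \<epsilon>)"
  proof (intro allI impI)
    fix w n assume g: "good \<omega> N w" and n: "n \<le> r*q"
    have rq: "r*q + N \<le> R*q"
    proof -
      have "N \<le> N*q" using q1 by simp
      moreover have "r*q \<le> r*q*N" using N by simp
      moreover have "R*q = r*q*N + N*q + N*q" unfolding R_def by (simp add: algebra_simps)
      ultimately show ?thesis by linarith
    qed
    from g consider (a) l where "1 \<le> l" "l \<le> N" "w = (\<lambda>n. \<omega> (n + l))"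
      | (b) l where "1 \<le> l" "l \<le> N" "w = (\<lambda>n. \<omega> (n * l))"
      | (c) l where "\<bar>l\<bar> \<le> int N" "w = (\<lambda>n. of_int l * \<omega> n)"
      unfolding good_def by blast
    then show "tdist (w n) (w (n+q)) < \<epsilon>"
    proof cases
      case a
      have "n + l \<le> R*q" using n rq a by linarith
      from one[OF this] have "tnorm (\<omega> (n+l) - \<omega> (n + l + q)) \<le> \<epsilon>/2" .
      thus ?thesis using a e by (simp add: tdist_def algebra_simps)
    next
      case b
      have "\<forall>j<l. n*l + j*q \<le> R*q"
      proof (intro allI impI)
        fix j assume "j < l"
        have "n*l \<le> r*q*N" using n b by (intro mult_le_mono) auto
        moreover have "j \<le> N" using \<open>j<l\<close> b by simp
        hence "j*q \<le> N*q" by simp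
        moreover have "(r+1)*N*q = r*q*N + N*q" by (simp add: algebra_simps)
        ultimately have "n*l + j*q \<le> (r+1)*N*q" by linarith
        also have "\<dots> \<le> R*q" by (simp add: R_def algebra_simps)
        finally show "n*l + j*q \<le> R*q" .
      qed
      from chain[where R=R and q=q and \<omega>=\<omega> and e=e' and k=l and m="n*l", OF step this] have "tnorm (\<omega> (n*l) - \<omega> (n*l + l*q)) \<le> real l * e'" .
      also have "\<dots> \<le> real N * e'" using b e' by (intro mult_right_mono) auto
      finally have "tnorm (\<omega> (n*l) - \<omega> ((n+q)*l)) \<le> \<epsilon>/2" using Ne' by (simp add: algebra_simps)
      thus ?thesis using b e by (simp add: tdist_def)
    next
      case c
      have "n \<le> R*q" using n rq by linarith
      have "tnorm (of_int l * (\<omega> n - \<omega> (n+q))) \<le> \<bar>of_int l\<bar> * tnorm (\<omega> n - \<omega> (n+q))"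
        by (rule tnorm_mult)
      also have "\<dots> \<le> real N * e'"
      proof (rule mult_mono)
        show "\<bar>real_of_int l\<bar> \<le> real N" using c by (metis of_int_abs of_int_le_iff of_int_of_nat_eq)
        show "tnorm (\<omega> n - \<omega> (n + q)) \<le> e'"
          using step[OF \<open>n \<le> R*q\<close>] by (simp add: tdist_def)
        show "0 \<le> real N" by simp
        have "0 \<le> tnorm (\<omega> n - \<omega> (n + q))"
          unfolding tnorm_def by (rule cInf_greatest) auto
        thus "0 \<le> tnorm (\<omega> n - \<omega> (n + q))" .
      qed
      finally show ?thesis using c e Ne' by (simp add: tdist_def right_diff_distrib)
    qed
  qed
  with q1 show ?thesis by blast
qed

theorem lemma3p1:
  fixes \<omega> :: "nat \<Rightarrow> real"
  assumes "repetition_property tdist \<omega>"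
  shows "(\<forall>l::nat. l \<ge> 1 \<longrightarrow> repetition_property tdist (\<lambda>n. \<omega> (n + l)))
    \<and> (\<forall>l::nat. l \<ge> 1 \<longrightarrow> repetition_property tdist (\<lambda>n. \<omega> (n * l)))
    \<and> (\<forall>l::int. repetition_property tdist (\<lambda>n. of_int l * \<omega> n))
    \<and> joint_repetition_property tdist
        ({\<omega>}
         \<union> {(\<lambda>n. \<omega> (n + l)) | l::nat. l \<ge> 1}
         \<union> {(\<lambda>n. \<omega> (n * l)) | l::nat. l \<ge> 1}
         \<union> {(\<lambda>n. of_int l * \<omega> n) | l::int. True})"
proof -
  define S where "S = ({\<omega>}
         \<union> {(\<lambda>n. \<omega> (n + l)) | l::nat. l \<ge> 1}
         \<union> {(\<lambda>n. \<omega> (n * l)) | l::nat. l \<ge> 1}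
         \<union> {(\<lambda>n. of_int l * \<omega> n) | l::int. True})"
  have gS: "\<exists>N\<ge>1. good \<omega> N w" if "w \<in> S" for w
  proof -
    from that consider "w = \<omega>" | (a) l where "l \<ge> 1" "w = (\<lambda>n. \<omega> (n + l))"
      | (b) l where "l \<ge> 1" "w = (\<lambda>n. \<omega> (n * l))"
      | (c) l where "w = (\<lambda>n. of_int l * \<omega> n)"
      unfolding S_def by blast
    then show ?thesis
    proof cases
      case 1
      then have "good \<omega> 1 w" unfolding good_def by (intro disjI2 disjI1) (rule exI[of _ 1], auto)
      thus ?thesis by blast
    next
      case a thus ?thesis unfolding good_def by blast
    next
      case b thus ?thesis unfolding good_def by blast
    next
      case c
      have "good \<omega> (nat \<bar>l\<bar> + 1) w" unfolding good_def using c
        by (intro disjI2) (rule exI[of _ l], auto)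
      thus ?thesis by (intro exI[of _ "nat \<bar>l\<bar> + 1"]) auto
    qed
  qed
  have fin: "finite F \<Longrightarrow> F \<subseteq> S \<Longrightarrow> \<exists>N\<ge>1. \<forall>w\<in>F. good \<omega> N w" for F
  proof (induction F rule: finite_induct)
    case empty thus ?case by auto
  next
    case (insert x F)
    then obtain N where N: "N \<ge> 1" "\<forall>w\<in>F. good \<omega> N w" by auto
    obtain M where M: "M \<ge> 1" "good \<omega> M x" using gS insert.prems by auto
    have "good \<omega> (max N M) w" if "w \<in> insert x F" for w
    proof (cases "w = x")
      case True thus ?thesis using M good_mono[of \<omega> M x "max N M"] by simp
    next
      case False thus ?thesis using that N good_mono[of \<omega> N w "max N M"] by simp
    qed
    thus ?case using N(1) by (intro exI[of _ "max N M"]) simp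
  qed
  have J: "\<exists>q::nat. q \<ge> 1 \<and> (\<forall>w\<in>F. \<forall>n\<le>r*q. tdist (w n) (w (n+q)) < \<epsilon>)"
    if JA: "F \<subseteq> S" "finite F" "\<epsilon> > 0" "r \<ge> 1" for F \<epsilon> r
  proof -
    obtain N where N: "N \<ge> 1" "\<forall>w\<in>F. good \<omega> N w" using fin[OF JA(2,1)] by blast
    from core[OF assms N(1) JA(3,4)] N(2) show ?thesis by blast
  qed
  have R: "repetition_property tdist w" if "w \<in> S" for w
    unfolding repetition_property_def
  proof (intro allI impI)
    fix \<epsilon> :: real and r :: nat assume "\<epsilon> > 0" "r \<ge> 1"
    from J[of "{w}" \<epsilon> r] that this show "\<exists>q\<ge>1. \<forall>n\<le>r * q. tdist (w n) (w (n + q)) < \<epsilon>" by auto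
  qed
  have "joint_repetition_property tdist S"
    unfolding joint_repetition_property_def using R J by blast
  moreover have "(\<lambda>n. \<omega> (n + l)) \<in> S" if "l \<ge> 1" for l using that unfolding S_def by blast
  moreover have "(\<lambda>n. \<omega> (n * l)) \<in> S" if "l \<ge> 1" for l using that unfolding S_def by blast
  moreover have "(\<lambda>n. of_int l * \<omega> n) \<in> S" for l unfolding S_def by blast
  ultimately have "(\<forall>l::nat. l \<ge> 1 \<longrightarrow> repetition_property tdist (\<lambda>n. \<omega> (n + l)))
    \<and> (\<forall>l::nat. l \<ge> 1 \<longrightarrow> repetition_property tdist (\<lambda>n. \<omega> (n * l)))
    \<and> (\<forall>l::int. repetition_property tdist (\<lambda>n. of_int l * \<omega> n))
    \<and> joint_repetition_property tdist S" using R by blast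
  then show ?thesis unfolding S_def .
qed

end
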